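(* For every Turing degree $\mathbf{d}$ there exist a finite alphabet $\Sigma$ and a minimal subshift $X \subseteq \Sigma^{\mathbb{Z}}$ such that the set $\{\deg_T x : x \in X\}$ of Turing degrees of the points of $X$ equals the cone $\{\mathbf{e} : \mathbf{e} \geq_T \mathbf{d}\}$.
   Context: For a finite alphabet $\Sigma$, the shift maps $\sigma_v$ on $\Sigma^{\mathbb{Z}^d}$ are defined by $\sigma_v(c)_x = c_{x+v}$; $\Sigma^{\mathbb{Z}^d}$ carries the product (Cantor) topology. A subshift is a closed subset of $\Sigma^{\mathbb{Z}^d}$ invariant under all shifts; its elements are called points. A subshift $X$ is minimal if it is nonempty and contains no nonempty subshift $Y \subsetneq X$ (equivalently, all points of $X$ contain the same finite patterns; equivalently, $X$ is the orbit closure of each of its points). The Turing degree of a point of $\Sigma^{\mathbb{Z}^d}$ is the Turing degree of the sequence obtained by listing its values along a fixed computable bijection $\mathbb{N} \to \mathbb{Z}^d$ (with symbols coded by a fixed computable coding). The cone above $\mathbf{d}$ is the set of degrees $\geq_T \mathbf{d}$. *)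

theory Defs
  imports Main "HOL-Library.Nat_Bijection"
begin

section \<open>Query computability (Kleene partial recursive functions relative to a given function)\<close>

datatype rf = Zero | Succ | Proj nat | Query | Comp rf "rf list" | Prim rf rf | Mu rf

inductive rf_eval :: "(nat \<Rightarrow> nat) \<Rightarrow> rf \<Rightarrow> nat list \<Rightarrow> nat \<Rightarrow> bool" for f where
  zero: "rf_eval f Zero xs 0"
| succ: "rf_eval f Succ (x # xs) (Suc x)"
| proj: "i < length xs \<Longrightarrow> rf_eval f (Proj i) xs (xs ! i)"
| query: "rf_eval f Query (x # xs) (f x)"
| comp: "list_all2 (\<lambda>g y. rf_eval f g xs y) gs ys \<Longrightarrow> rf_eval f h ys v \<Longrightarrow> rf_eval f (Comp h gs) xs v"
| prim0: "rf_eval f b xs v \<Longrightarrow> rf_eval f (Prim b s) (0 # xs) v"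
| primS: "rf_eval f (Prim b s) (n # xs) r \<Longrightarrow> rf_eval f s (n # r # xs) v
          \<Longrightarrow> rf_eval f (Prim b s) (Suc n # xs) v"
| mu: "rf_eval f g (n # xs) 0 \<Longrightarrow> (\<forall>m<n. \<exists>w. w \<noteq> 0 \<and> rf_eval f g (m # xs) w)
          \<Longrightarrow> rf_eval f (Mu g) xs n"

definition turing_red :: "(nat \<Rightarrow> nat) \<Rightarrow> (nat \<Rightarrow> nat) \<Rightarrow> bool" where
  "turing_red g f \<longleftrightarrow> (\<exists>t. \<forall>n. rf_eval f t [n] (g n))"

definition turing_equiv :: "(nat \<Rightarrow> nat) \<Rightarrow> (nat \<Rightarrow> nat) \<Rightarrow> bool" where
  "turing_equiv f g \<longleftrightarrow> turing_red f g \<and> turing_red g f"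

definition tdeg :: "(nat \<Rightarrow> nat) \<Rightarrow> (nat \<Rightarrow> nat) set" where
  "tdeg f = {g. turing_equiv g f}"

definition shift :: "int \<Rightarrow> (int \<Rightarrow> nat) \<Rightarrow> (int \<Rightarrow> nat)" where
  "shift v c = (\<lambda>x. c (x + v))"

text \<open>Closed in the product (Cantor) topology of the discrete finite alphabet.\<close>
definition closed_cfg :: "(int \<Rightarrow> nat) set \<Rightarrow> bool" where
  "closed_cfg X \<longleftrightarrow>
     (\<forall>c. (\<forall>n::nat. \<exists>y\<in>X. \<forall>i. \<bar>i\<bar> \<le> int n \<longrightarrow> y i = c i) \<longrightarrow> c \<in> X)"

definition subshift :: "nat \<Rightarrow> (int \<Rightarrow> nat) set \<Rightarrow> bool" where
  "subshift k X \<longleftrightarrow> X \<subseteq> {c. \<forall>i. c i < k} \<and> closed_cfg X \<and>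
     (\<forall>c\<in>X. \<forall>v. shift v c \<in> X)"

definition minimal_subshift :: "nat \<Rightarrow> (int \<Rightarrow> nat) set \<Rightarrow> bool" where
  "minimal_subshift k X \<longleftrightarrow> subshift k X \<and> X \<noteq> {} \<and>
     (\<forall>Y. subshift k Y \<and> Y \<noteq> {} \<and> Y \<subseteq> X \<longrightarrow> Y = X)"

definition point_code :: "(int \<Rightarrow> nat) \<Rightarrow> (nat \<Rightarrow> nat)" where
  "point_code c = c \<circ> int_decode"

end

theory Submission
  imports Defs
begin

fun rsubst :: "rf \<Rightarrow> rf \<Rightarrow> rf" where
  "rsubst s Query = Comp s [Proj 0]"
| "rsubst s (Comp h gs) = Comp (rsubst s h) (map (rsubst s) gs)"
| "rsubst s (Prim b t) = Prim (rsubst s b) (rsubst s t)"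
| "rsubst s (Mu g) = Mu (rsubst s g)"
| "rsubst s Zero = Zero"
| "rsubst s Succ = Succ"
| "rsubst s (Proj i) = Proj i"

lemma rsubst_eval:
  assumes "rf_eval f t xs v" and s: "\<forall>x. rf_eval h s [x] (f x)"
  shows "rf_eval h (rsubst s t) xs v"
  using assms(1)
proof (induction rule: rf_eval.induct)
  case (zero xs) then show ?case by (simp add: rf_eval.zero)
next
  case (succ x xs) then show ?case by (simp add: rf_eval.succ)
next
  case (proj i xs) then show ?case by (simp add: rf_eval.proj)
next
  case (query x xs)
  have "rf_eval h (Proj 0) (x # xs) x" using rf_eval.proj[of 0 "x#xs" h] by simp
  then show ?case using s by (auto intro!: rf_eval.comp[where ys="[x]"])
next
  case (comp xs gs ys hh v)
  have "list_all2 (\<lambda>g. rf_eval h g xs) (map (rsubst s) gs) ys"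
    using comp(1) by (auto simp: list_all2_map1 elim: list_all2_mono)
  then show ?case using comp by (auto intro: rf_eval.comp)
next
  case (prim0 b xs v s') then show ?case by (auto intro: rf_eval.prim0)
next
  case (primS b s' n xs r v) then show ?case by (auto intro: rf_eval.primS)
next
  case (mu g n xs) then show ?case by (auto intro!: rf_eval.mu)
qed

lemma turing_red_trans: "turing_red g f \<Longrightarrow> turing_red f h \<Longrightarrow> turing_red g h"
  unfolding turing_red_def
proof -
  assume "\<exists>t. \<forall>n. rf_eval f t [n] (g n)" "\<exists>t. \<forall>n. rf_eval h t [n] (f n)"
  then obtain t s where t: "\<forall>n. rf_eval f t [n] (g n)" and s: "\<forall>n. rf_eval h s [n] (f n)" by blast
  show "\<exists>t. \<forall>n. rf_eval h t [n] (g n)"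
    using rsubst_eval[OF _ s] t by blast
qed

lemma turing_red_refl: "turing_red f f"
  unfolding turing_red_def by (metis rf_eval.query)

lemma tdeg_eq: "turing_equiv f g \<Longrightarrow> tdeg f = tdeg g"
  unfolding tdeg_def turing_equiv_def using turing_red_trans by blast

definition cmp :: "(nat \<Rightarrow> nat) \<Rightarrow> nat \<Rightarrow> (nat list \<Rightarrow> nat) \<Rightarrow> bool" where
  "cmp f k F \<longleftrightarrow> (\<exists>t. \<forall>xs. length xs = k \<longrightarrow> rf_eval f t xs (F xs))"

lemma cmp_ext: "cmp f k F \<Longrightarrow> (\<And>xs. length xs = k \<Longrightarrow> F xs = G xs) \<Longrightarrow> cmp f k G"
  unfolding cmp_def by (metis (no_types, lifting))

fun cprog :: "nat \<Rightarrow> rf" where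
  "cprog 0 = Zero" | "cprog (Suc n) = Comp Succ [cprog n]"

lemma cprog_eval: "rf_eval f (cprog c) xs c"
proof (induction c)
  case 0 then show ?case by (simp add: rf_eval.zero)
next
  case (Suc c) then show ?case by (auto intro!: rf_eval.comp[where ys="[c]"] rf_eval.succ[of f c "[]", simplified])
qed

lemma cmp_const[intro]: "cmp f k (\<lambda>xs. c)"
  unfolding cmp_def using cprog_eval by blast

lemma cmp_proj[intro]: "i < k \<Longrightarrow> cmp f k (\<lambda>xs. xs ! i)"
  unfolding cmp_def by (metis rf_eval.proj)

lemma cmp_query[intro]: "cmp f k A \<Longrightarrow> cmp f k (\<lambda>xs. f (A xs))"
  unfolding cmp_def
proof -
  assume "\<exists>t. \<forall>xs. length xs = k \<longrightarrow> rf_eval f t xs (A xs)"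
  then obtain t where t: "\<forall>xs. length xs = k \<longrightarrow> rf_eval f t xs (A xs)" by blast
  have "\<forall>xs. length xs = k \<longrightarrow> rf_eval f (Comp Query [t]) xs (f (A xs))"
    using t by (auto intro!: rf_eval.comp[where ys="[A _]"] rf_eval.query[of f _ "[]", simplified])
  then show "\<exists>t. \<forall>xs. length xs = k \<longrightarrow> rf_eval f t xs (f (A xs))" by blast
qed

lemma cmp_list: "\<forall>G\<in>set Gs. cmp f k G \<Longrightarrow>
   \<exists>ts. \<forall>xs. length xs = k \<longrightarrow> list_all2 (\<lambda>g. rf_eval f g xs) ts (map (\<lambda>G. G xs) Gs)"
proof (induction Gs)
  case Nil then show ?case by auto
next
  case (Cons G Gs)
  then obtain ts where ts: "\<forall>xs. length xs = k \<longrightarrow> list_all2 (\<lambda>g. rf_eval f g xs) ts (map (\<lambda>G. G xs) Gs)" by auto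
  obtain t where t: "\<forall>xs. length xs = k \<longrightarrow> rf_eval f t xs (G xs)" using Cons(2) unfolding cmp_def by auto
  show ?case using ts t by (intro exI[of _ "t # ts"]) auto
qed

lemma cmp_compose: "cmp f m H \<Longrightarrow> length Gs = m \<Longrightarrow> \<forall>G\<in>set Gs. cmp f k G \<Longrightarrow>
   cmp f k (\<lambda>xs. H (map (\<lambda>G. G xs) Gs))"
proof -
  assume H: "cmp f m H" and l: "length Gs = m" and G: "\<forall>G\<in>set Gs. cmp f k G"
  obtain ts where ts: "\<forall>xs. length xs = k \<longrightarrow> list_all2 (\<lambda>g. rf_eval f g xs) ts (map (\<lambda>G. G xs) Gs)"
    using cmp_list[OF G] by auto
  obtain h where h: "\<forall>xs. length xs = m \<longrightarrow> rf_eval f h xs (H xs)" using H unfolding cmp_def by auto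
  have "\<forall>xs. length xs = k \<longrightarrow> rf_eval f (Comp h ts) xs (H (map (\<lambda>G. G xs) Gs))"
    using ts h l by (auto intro: rf_eval.comp)
  then show ?thesis unfolding cmp_def by blast
qed

lemma cmp_comp1: "cmp f 1 H \<Longrightarrow> cmp f k A \<Longrightarrow> cmp f k (\<lambda>xs. H [A xs])"
  using cmp_compose[of f 1 H "[A]" k] by simp

lemma cmp_comp2: "cmp f 2 H \<Longrightarrow> cmp f k A \<Longrightarrow> cmp f k B \<Longrightarrow> cmp f k (\<lambda>xs. H [A xs, B xs])"
  using cmp_compose[of f 2 H "[A,B]" k] by simp

lemma cmp_comp3: "cmp f 3 H \<Longrightarrow> cmp f k A \<Longrightarrow> cmp f k B \<Longrightarrow> cmp f k C \<Longrightarrow>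
   cmp f k (\<lambda>xs. H [A xs, B xs, C xs])"
  using cmp_compose[of f 3 H "[A,B,C]" k] by (simp add: numeral_3_eq_3)

lemma cmp_prim: "cmp f k B \<Longrightarrow> cmp f (Suc (Suc k)) S \<Longrightarrow>
   cmp f (Suc k) (\<lambda>xs. rec_nat (B (tl xs)) (\<lambda>n r. S (n # r # tl xs)) (hd xs))"
proof -
  assume "cmp f k B" "cmp f (Suc (Suc k)) S"
  then obtain b s where b: "\<forall>xs. length xs = k \<longrightarrow> rf_eval f b xs (B xs)"
    and s: "\<forall>xs. length xs = Suc (Suc k) \<longrightarrow> rf_eval f s xs (S xs)" unfolding cmp_def by blast
  have "rf_eval f (Prim b s) (n # ys) (rec_nat (B ys) (\<lambda>n r. S (n # r # ys)) n)" if "length ys = k" for n ys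
  proof (induction n)
    case 0 then show ?case using b that by (auto intro: rf_eval.prim0)
  next
    case (Suc n)
    show ?case by (rule rf_eval.primS[OF Suc.IH]) (use s that in auto)
  qed
  note P = this
  have "\<forall>xs. length xs = Suc k \<longrightarrow> rf_eval f (Prim b s) xs (rec_nat (B (tl xs)) (\<lambda>n r. S (n # r # tl xs)) (hd xs))"
  proof (intro allI impI)
    fix xs :: "nat list" assume "length xs = Suc k"
    then obtain n ys where "xs = n # ys" "length ys = k" by (cases xs) auto
    then show "rf_eval f (Prim b s) xs (rec_nat (B (tl xs)) (\<lambda>n r. S (n # r # tl xs)) (hd xs))"
      using P by simp
  qed
  then show ?thesis unfolding cmp_def by blast
qed

lemma cmp_mu: "cmp f (Suc k) G \<Longrightarrow> (\<And>xs. length xs = k \<Longrightarrow> \<exists>n. G (n # xs) = 0) \<Longrightarrow>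
   cmp f k (\<lambda>xs. LEAST n. G (n # xs) = 0)"
proof -
  assume "cmp f (Suc k) G" and ex: "\<And>xs. length xs = k \<Longrightarrow> \<exists>n. G (n # xs) = 0"
  then obtain g where g: "\<forall>xs. length xs = Suc k \<longrightarrow> rf_eval f g xs (G xs)" unfolding cmp_def by blast
  have "rf_eval f (Mu g) xs (LEAST n. G (n # xs) = 0)" if "length xs = k" for xs
  proof (rule rf_eval.mu)
    show "rf_eval f g ((LEAST n. G (n # xs) = 0) # xs) 0"
      using g[rule_format, of "(LEAST n. G (n # xs) = 0) # xs"] that LeastI_ex[OF ex[OF that]] by simp
    show "\<forall>m<(LEAST n. G (n # xs) = 0). \<exists>w. w \<noteq> 0 \<and> rf_eval f g (m # xs) w"
    proof (intro allI impI)
      fix m assume "m < (LEAST n. G (n # xs) = 0)"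
      then have "G (m # xs) \<noteq> 0" by (rule not_less_Least)
      moreover have "rf_eval f g (m # xs) (G (m # xs))" using g that by simp
      ultimately show "\<exists>w. w \<noteq> 0 \<and> rf_eval f g (m # xs) w" by blast
    qed
  qed
  then show ?thesis unfolding cmp_def by blast
qed

named_theorems cmpI
declare cmp_const[cmpI] cmp_proj[cmpI] cmp_query[cmpI]


lemma cmp_Suc[intro,cmpI]: "cmp f k A \<Longrightarrow> cmp f k (\<lambda>xs. Suc (A xs))"
  unfolding cmp_def
proof -
  assume "\<exists>t. \<forall>xs. length xs = k \<longrightarrow> rf_eval f t xs (A xs)"
  then obtain t where t: "\<forall>xs. length xs = k \<longrightarrow> rf_eval f t xs (A xs)" by blast
  have "\<forall>xs. length xs = k \<longrightarrow> rf_eval f (Comp Succ [t]) xs (Suc (A xs))"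
    using t by (auto intro!: rf_eval.comp[where ys="[A _]"] rf_eval.succ[of f _ "[]", simplified])
  then show "\<exists>t. \<forall>xs. length xs = k \<longrightarrow> rf_eval f t xs (Suc (A xs))" by blast
qed

lemma len1: "length xs = 1 \<Longrightarrow> \<exists>a. xs = [a]"
  by (auto simp: length_Suc_conv)
lemma len2: "length xs = 2 \<Longrightarrow> \<exists>a b. xs = [a,b]"
  by (auto simp: length_Suc_conv numeral_2_eq_2)
lemma len3: "length xs = 3 \<Longrightarrow> \<exists>a b c. xs = [a,b,c]"
  by (auto simp: length_Suc_conv numeral_3_eq_3)

lemma cmp_ext': "cmp f k F \<Longrightarrow> k = k' \<Longrightarrow> (\<And>xs. length xs = k' \<Longrightarrow> F xs = G xs) \<Longrightarrow> cmp f k' G"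
  using cmp_ext by blast

lemma cmp_add2: "cmp f 2 (\<lambda>xs. xs ! 0 + xs ! 1)"
proof -
  have "cmp f (Suc 1) (\<lambda>xs. rec_nat ((tl xs) ! 0) (\<lambda>n r. Suc ((n # r # tl xs) ! 1)) (hd xs))"
    by (rule cmp_prim[where B="\<lambda>ys. ys!0" and S="\<lambda>zs. Suc (zs!1)"]) (intro cmpI; simp)+
  then show ?thesis
  proof (rule cmp_ext', simp)
    fix xs :: "nat list" assume "length xs = 2"
    then obtain a b where xs: "xs = [a,b]" using len2 by blast
    show "rec_nat ((tl xs) ! 0) (\<lambda>n r. Suc ((n # r # tl xs) ! 1)) (hd xs) = xs ! 0 + xs ! 1"
      unfolding xs by (induction a) auto
  qed
qed

lemma cmp_add[intro,cmpI]: "cmp f k A \<Longrightarrow> cmp f k B \<Longrightarrow> cmp f k (\<lambda>xs. A xs + B xs)"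
  using cmp_comp2[OF cmp_add2, of f k A B] by simp

lemma cmp_mult2: "cmp f 2 (\<lambda>xs. xs ! 0 * xs ! 1)"
proof -
  have "cmp f (Suc 1) (\<lambda>xs. rec_nat 0 (\<lambda>n r. (n # r # tl xs) ! 1 + (n # r # tl xs) ! 2) (hd xs))"
    by (rule cmp_prim[where B="\<lambda>ys. 0" and S="\<lambda>zs. zs!1 + zs!2"]) (intro cmpI; simp)+
  then show ?thesis
  proof (rule cmp_ext', simp)
    fix xs :: "nat list" assume "length xs = 2"
    then obtain a b where xs: "xs = [a,b]" using len2 by blast
    show "rec_nat 0 (\<lambda>n r. (n # r # tl xs) ! 1 + (n # r # tl xs) ! 2) (hd xs) = xs ! 0 * xs ! 1"
      unfolding xs by (induction a) auto
  qed
qed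

lemma cmp_mult[intro,cmpI]: "cmp f k A \<Longrightarrow> cmp f k B \<Longrightarrow> cmp f k (\<lambda>xs. A xs * B xs)"
  using cmp_comp2[OF cmp_mult2, of f k A B] by simp

lemma cmp_pred1: "cmp f 1 (\<lambda>xs. xs ! 0 - 1)"
proof -
  have "cmp f (Suc 0) (\<lambda>xs. rec_nat 0 (\<lambda>n r. (n # r # tl xs) ! 0) (hd xs))"
    by (rule cmp_prim[where B="\<lambda>ys. 0" and S="\<lambda>zs. zs!0"]) (intro cmpI; simp)+
  then show ?thesis
  proof (rule cmp_ext', simp)
    fix xs :: "nat list" assume "length xs = 1"
    then obtain a where xs: "xs = [a]" using len1 by blast
    show "rec_nat 0 (\<lambda>n r. (n # r # tl xs) ! 0) (hd xs) = xs ! 0 - 1"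
      unfolding xs by (cases a) auto
  qed
qed

lemma cmp_pred[intro,cmpI]: "cmp f k A \<Longrightarrow> cmp f k (\<lambda>xs. A xs - 1)"
  using cmp_comp1[OF cmp_pred1, of f k A] by simp

lemma cmp_sub2: "cmp f 2 (\<lambda>xs. xs ! 1 - xs ! 0)"
proof -
  have "cmp f (Suc 1) (\<lambda>xs. rec_nat ((tl xs) ! 0) (\<lambda>n r. (n # r # tl xs) ! 1 - 1) (hd xs))"
    by (rule cmp_prim[where B="\<lambda>ys. ys!0" and S="\<lambda>zs. zs!1 - 1"]) (intro cmpI; simp)+
  then show ?thesis
  proof (rule cmp_ext', simp)
    fix xs :: "nat list" assume "length xs = 2"
    then obtain a b where xs: "xs = [a,b]" using len2 by blast
    show "rec_nat ((tl xs) ! 0) (\<lambda>n r. (n # r # tl xs) ! 1 - 1) (hd xs) = xs ! 1 - xs ! 0"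
      unfolding xs by (induction a) auto
  qed
qed

lemma cmp_sub[intro,cmpI]: "cmp f k A \<Longrightarrow> cmp f k B \<Longrightarrow> cmp f k (\<lambda>xs. A xs - B xs)"
  using cmp_comp2[OF cmp_sub2, of f k B A] by simp

lemma cmp_cond3: "cmp f 3 (\<lambda>xs. if xs ! 0 = 0 then xs ! 1 else xs ! 2)"
proof -
  have "cmp f (Suc 2) (\<lambda>xs. rec_nat ((tl xs) ! 0) (\<lambda>n r. (n # r # tl xs) ! 3) (hd xs))"
    by (rule cmp_prim[where B="\<lambda>ys. ys!0" and S="\<lambda>zs. zs!3"]) (intro cmpI; simp)+
  then show ?thesis
  proof (rule cmp_ext', simp)
    fix xs :: "nat list" assume "length xs = 3"
    then obtain a b c where xs: "xs = [a,b,c]"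
      using len3 by blast
    show "rec_nat ((tl xs) ! 0) (\<lambda>n r. (n # r # tl xs) ! 3) (hd xs) = (if xs ! 0 = 0 then xs ! 1 else xs ! 2)"
      unfolding xs by (cases a) (auto simp: numeral_3_eq_3)
  qed
qed

definition cmpP :: "(nat \<Rightarrow> nat) \<Rightarrow> nat \<Rightarrow> (nat list \<Rightarrow> bool) \<Rightarrow> bool" where
  "cmpP f k P \<longleftrightarrow> cmp f k (\<lambda>xs. if P xs then 1 else 0)"

lemma cmp_if[intro,cmpI]: "cmpP f k P \<Longrightarrow> cmp f k A \<Longrightarrow> cmp f k B \<Longrightarrow>
   cmp f k (\<lambda>xs. if P xs then A xs else B xs)"
  unfolding cmpP_def
  apply (rule cmp_ext[OF cmp_comp3[OF cmp_cond3, of f k "\<lambda>xs. if P xs then 1 else 0" B A]])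
  by auto

lemma cmpP_le[intro,cmpI]: "cmp f k A \<Longrightarrow> cmp f k B \<Longrightarrow> cmpP f k (\<lambda>xs. A xs \<le> B xs)"
  unfolding cmpP_def
  apply (rule cmp_ext[of f k "\<lambda>xs. 1 - (A xs - B xs)"])
  apply (intro cmpI; assumption?)
  by auto

lemma cmpP_less[intro,cmpI]: "cmp f k A \<Longrightarrow> cmp f k B \<Longrightarrow> cmpP f k (\<lambda>xs. A xs < B xs)"
  unfolding cmpP_def
  apply (rule cmp_ext[of f k "\<lambda>xs. 1 - (Suc (A xs) - B xs)"])
  apply (intro cmpI; assumption?)
  by auto

lemma cmpP_eq[intro,cmpI]: "cmp f k A \<Longrightarrow> cmp f k B \<Longrightarrow> cmpP f k (\<lambda>xs. A xs = B xs)"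
  unfolding cmpP_def
  apply (rule cmp_ext[of f k "\<lambda>xs. 1 - ((A xs - B xs) + (B xs - A xs))"])
  apply (intro cmpI; assumption?)
  by auto

lemma cmpP_not[intro,cmpI]: "cmpP f k P \<Longrightarrow> cmpP f k (\<lambda>xs. \<not> P xs)"
  unfolding cmpP_def
  by (rule cmp_ext[of f k "\<lambda>xs. 1 - (if P xs then 1 else 0)"]) auto

lemma cmpP_conj[intro,cmpI]: "cmpP f k P \<Longrightarrow> cmpP f k Q \<Longrightarrow> cmpP f k (\<lambda>xs. P xs \<and> Q xs)"
  unfolding cmpP_def
  by (rule cmp_ext[of f k "\<lambda>xs. (if P xs then 1 else 0) * (if Q xs then 1 else 0)"]) auto

lemma cmpP_disj[intro,cmpI]: "cmpP f k P \<Longrightarrow> cmpP f k Q \<Longrightarrow> cmpP f k (\<lambda>xs. P xs \<or> Q xs)"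
  unfolding cmpP_def
  by (rule cmp_ext[of f k "\<lambda>xs. if P xs then 1 else (if Q xs then 1 else 0)"]) (auto simp: cmpP_def[symmetric])

lemma cmp_muP: "cmpP f (Suc k) P \<Longrightarrow> (\<And>xs. length xs = k \<Longrightarrow> \<exists>n. P (n # xs)) \<Longrightarrow>
   cmp f k (\<lambda>xs. LEAST n. P (n # xs))"
proof -
  assume a0: "cmpP f (Suc k) P" and e: "\<And>xs. length xs = k \<Longrightarrow> \<exists>n. P (n # xs)"
  have a: "cmp f (Suc k) (\<lambda>xs. if P xs then 1 else 0)" using a0 unfolding cmpP_def .
  have eq: "\<And>Q. (1 - (if Q then 1 else 0) = (0::nat)) = Q" by simp
  have "cmp f k (\<lambda>xs. LEAST n. (\<lambda>ys. 1 - (if P ys then 1 else 0)) (n # xs) = (0::nat))"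
    apply (rule cmp_mu[where G="\<lambda>ys. 1 - (if P ys then 1 else 0)"])
    apply (intro cmp_sub cmp_const a)
    using e unfolding eq by blast
  then show ?thesis unfolding eq .
qed

lemma cmp_div2: "cmp f 2 (\<lambda>xs. xs ! 0 div xs ! 1)"
proof -
  have "cmp f 2 (\<lambda>xs. LEAST q. (q # xs) ! 2 = 0 \<or> (q # xs) ! 1 < Suc ((q # xs) ! 0) * (q # xs) ! 2)"
    apply (rule cmp_muP[where P="\<lambda>ys. ys!2 = 0 \<or> ys!1 < Suc (ys!0) * ys!2"])
     apply (intro cmpI; simp)+
    subgoal for xs by (rule exI[of _ "xs!0"]) (cases "xs!1", auto)
    done
  then show ?thesis
  proof (rule cmp_ext', simp)
    fix xs :: "nat list" assume "length xs = 2"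
    then obtain n m where xs: "xs = [n,m]"
      using len2 by blast
    show "(LEAST q. (q # xs) ! 2 = 0 \<or> (q # xs) ! 1 < Suc ((q # xs) ! 0) * (q # xs) ! 2) = xs ! 0 div xs ! 1"
    proof (cases "m = 0")
      case True then show ?thesis by (simp add: xs)
    next
      case False
      have "(LEAST q. n < Suc q * m) = n div m"
      proof (rule Least_equality)
        show "n < Suc (n div m) * m" using False
          using mod_less_divisor[of m n] div_mult_mod_eq[of n m] False unfolding mult_Suc by linarith
        show "n div m \<le> q" if "n < Suc q * m" for q
          using less_mult_imp_div_less[OF that] by simp
      qed
      then show ?thesis unfolding xs using False by simp
    qed
  qed
qed

lemma cmp_div[intro,cmpI]: "cmp f k A \<Longrightarrow> cmp f k B \<Longrightarrow> cmp f k (\<lambda>xs. A xs div B xs)"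
  using cmp_comp2[OF cmp_div2, of f k A B] by simp

lemma cmp_mod[intro,cmpI]: "cmp f k A \<Longrightarrow> cmp f k B \<Longrightarrow> cmp f k (\<lambda>xs. A xs mod B xs)"
  apply (rule cmp_ext[of f k "\<lambda>xs. A xs - B xs * (A xs div B xs)"])
  apply (intro cmpI; assumption?)
  by (auto simp: minus_mult_div_eq_mod)

lemma cmp_pow2_1: "cmp f 1 (\<lambda>xs. 2 ^ (xs ! 0))"
proof -
  have "cmp f (Suc 0) (\<lambda>xs. rec_nat 1 (\<lambda>n r. (n # r # tl xs) ! 1 * 2) (hd xs))"
    by (rule cmp_prim[where B="\<lambda>ys. 1" and S="\<lambda>zs. zs!1 * 2"]) (intro cmpI; simp)+
  then show ?thesis
  proof (rule cmp_ext', simp)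
    fix xs :: "nat list" assume "length xs = 1"
    then obtain a where xs: "xs = [a]" using len1 by blast
    show "rec_nat 1 (\<lambda>n r. (n # r # tl xs) ! 1 * 2) (hd xs) = 2 ^ (xs ! 0)"
      unfolding xs by (induction a) auto
  qed
qed

lemma cmp_pow2[intro,cmpI]: "cmp f k A \<Longrightarrow> cmp f k (\<lambda>xs. 2 ^ (A xs))"
  using cmp_comp1[OF cmp_pow2_1, of f k A] by simp

lemma cmpP_dvd[intro,cmpI]: "cmp f k A \<Longrightarrow> cmp f k B \<Longrightarrow> cmpP f k (\<lambda>xs. A xs dvd B xs)"
  by (subst dvd_eq_mod_eq_0) (intro cmpP_eq cmp_mod cmp_const)

lemma cmpP_even[intro,cmpI]: "cmp f k A \<Longrightarrow> cmpP f k (\<lambda>xs. even (A xs))"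
  by (intro cmpP_dvd cmp_const)

lemma cmpP_const[intro,cmpI]: "cmpP f k (\<lambda>xs. c)"
  unfolding cmpP_def by (cases c) auto

lemma cmp_red: "turing_red g f \<Longrightarrow> cmp f k A \<Longrightarrow> cmp f k (\<lambda>xs. g (A xs))"
proof -
  assume "turing_red g f" "cmp f k A"
  then obtain t where t: "\<forall>n. rf_eval f t [n] (g n)" unfolding turing_red_def by blast
  have "cmp f 1 (\<lambda>xs. g (xs ! 0))" unfolding cmp_def
  proof (intro exI allI impI)
    fix xs :: "nat list" assume "length xs = 1"
    then obtain a where "xs = [a]" using len1 by blast
    then show "rf_eval f t xs (g (xs ! 0))" using t by simp
  qed
  from cmp_comp1[OF this \<open>cmp f k A\<close>] show ?thesis by simp
qed

lemma red_cmp: "cmp f 1 (\<lambda>xs. g (xs ! 0)) \<Longrightarrow> turing_red g f"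
  unfolding turing_red_def cmp_def
proof -
  assume "\<exists>t. \<forall>xs. length xs = 1 \<longrightarrow> rf_eval f t xs (g (xs ! 0))"
  then obtain t where "\<forall>xs. length xs = 1 \<longrightarrow> rf_eval f t xs (g (xs ! 0))" by blast
  then have "\<forall>n. rf_eval f t [n] (g n)" by (metis length_Cons list.size(3) One_nat_def nth_Cons_0)
  then show "\<exists>t. \<forall>n. rf_eval f t [n] (g n)" by blast
qed

definition bitsof :: "(nat \<Rightarrow> nat) \<Rightarrow> nat \<Rightarrow> nat" where
  "bitsof f k = (if f (fst (prod_decode k)) = snd (prod_decode k) then 1 else 0)"

definition gsym :: "(nat \<Rightarrow> nat) \<Rightarrow> nat \<Rightarrow> nat" where
  "gsym d l = (if even l then 2 else bitsof d (l div 2))"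

definition compat :: "(nat \<Rightarrow> int) \<Rightarrow> bool" where
  "compat r \<longleftrightarrow> (\<forall>m. r (Suc m) mod 2^m = r m mod 2^m)"

definition Dv :: "(nat \<Rightarrow> int) \<Rightarrow> int \<Rightarrow> nat \<Rightarrow> bool" where
  "Dv r i m \<longleftrightarrow> (2::int)^m dvd (i + r m)"

definition good :: "(nat \<Rightarrow> nat) \<Rightarrow> (nat \<Rightarrow> int) \<Rightarrow> (int \<Rightarrow> nat) \<Rightarrow> bool" where
  "good d r y \<longleftrightarrow> compat r \<and> (\<forall>i l. Dv r i l \<and> \<not> Dv r i (Suc l) \<longrightarrow> y i = gsym d l) \<and>
     (\<forall>i. (\<forall>m. Dv r i m) \<longrightarrow> (\<forall>M. \<exists>L\<ge>M. gsym d L = y i))"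

definition Xd :: "(nat \<Rightarrow> nat) \<Rightarrow> (int \<Rightarrow> nat) set" where
  "Xd d = {y. \<exists>r. good d r y}"

lemma bitsof_le: "bitsof f k \<le> 1" by (simp add: bitsof_def)

lemma gsym_2: "gsym d l = 2 \<longleftrightarrow> even l"
  using bitsof_le[of d "l div 2"] by (auto simp: gsym_def)

lemma gsym_less: "gsym d l < 3"
  using bitsof_le[of d "l div 2"] by (auto simp: gsym_def)

lemma compat_le: "compat r \<Longrightarrow> m \<le> n \<Longrightarrow> r n mod 2^m = r m mod 2^m"
proof (induction n)
  case 0 then show ?case by simp
next
  case (Suc n)
  show ?case
  proof (cases "m = Suc n")
    case True then show ?thesis by simp
  next
    case False
    then have "m \<le> n" using Suc by simp
    have "r (Suc n) mod 2^m = (r (Suc n) mod 2^n) mod 2^m"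
      using \<open>m \<le> n\<close> by (simp add: mod_mod_cancel le_imp_power_dvd)
    also have "\<dots> = (r n mod 2^n) mod 2^m" using Suc.prems(1) unfolding compat_def by simp
    also have "\<dots> = r n mod 2^m" using \<open>m \<le> n\<close> by (simp add: mod_mod_cancel le_imp_power_dvd)
    finally show ?thesis using Suc.IH[OF Suc.prems(1) \<open>m \<le> n\<close>] by simp
  qed
qed

lemma compat_dvd: "compat r \<Longrightarrow> m \<le> n \<Longrightarrow> (2::int)^m dvd (r n - r m)"
  using compat_le mod_eq_dvd_iff by blast

lemma Dv_mono: "compat r \<Longrightarrow> m \<le> n \<Longrightarrow> Dv r i n \<Longrightarrow> Dv r i m"
  unfolding Dv_def
proof -
  assume c: "compat r" and mn: "m \<le> n" and d: "(2::int) ^ n dvd i + r n"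
  have "(2::int)^m dvd (i + r n)" using d mn by (meson dvd_trans le_imp_power_dvd)
  moreover have "(2::int)^m dvd (r n - r m)" using compat_dvd[OF c mn] .
  ultimately have "(2::int)^m dvd ((i + r n) - (r n - r m))" by (rule dvd_diff)
  then show "(2::int)^m dvd (i + r m)" by simp
qed

lemma Dv_cong: "Dv r a m \<Longrightarrow> Dv r i m \<longleftrightarrow> (2::int)^m dvd (i - a)"
  unfolding Dv_def
proof -
  assume a: "(2::int) ^ m dvd a + r m"
  have "i - a = (i + r m) - (a + r m)" by simp
  then show "((2::int) ^ m dvd i + r m) = ((2::int) ^ m dvd i - a)"
    using a by (metis dvd_add_left_iff dvd_diff diff_add_cancel)
qed

lemma Dv_0[simp]: "Dv r i 0" by (simp add: Dv_def)

lemma Dv_shift: "m \<le> n \<Longrightarrow> Dv r (x + 2^n) m \<longleftrightarrow> Dv r x m"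
  unfolding Dv_def
proof -
  assume "m \<le> n"
  then have "(2::int)^m dvd 2^n" by (rule le_imp_power_dvd)
  have "x + 2 ^ n + r m = (x + r m) + 2^n" by simp
  then show "((2::int) ^ m dvd x + 2 ^ n + r m) = ((2::int) ^ m dvd x + r m)"
    using \<open>(2::int)^m dvd 2^n\<close> by (metis dvd_add_left_iff)
qed

lemma Dv_split: "compat r \<Longrightarrow> Dv r a m \<Longrightarrow> Dv r a (Suc m) \<longleftrightarrow> \<not> Dv r (a + 2^m) (Suc m)"
proof -
  assume c: "compat r" and a: "Dv r a m"
  have "(2::int)^m dvd (a + r m)" using a by (simp add: Dv_def)
  moreover have "(2::int)^m dvd (r (Suc m) - r m)" using compat_dvd[OF c, of m "Suc m"] by simp
  ultimately have "(2::int)^m dvd ((a + r m) + (r (Suc m) - r m))" by (rule dvd_add)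
  then obtain t where t: "a + r (Suc m) = 2^m * t" by (auto simp: algebra_simps elim!: dvdE)
  have e1: "Dv r a (Suc m) \<longleftrightarrow> even t"
    unfolding Dv_def t by (simp add: mult_dvd_mono)
  have "a + 2^m + r (Suc m) = 2^m * (t + 1)" using t by (simp add: algebra_simps)
  then have e2: "Dv r (a + 2^m) (Suc m) \<longleftrightarrow> even (t+1)"
    unfolding Dv_def by (simp add: mult_dvd_mono)
  show ?thesis using e1 e2 by simp
qed

lemma good_level: "good d r y \<Longrightarrow> Dv r i l \<Longrightarrow> \<not> Dv r i (Suc l) \<Longrightarrow> y i = gsym d l"
  unfolding good_def by blast

definition Tst :: "(nat \<Rightarrow> nat) \<Rightarrow> nat \<Rightarrow> nat \<Rightarrow> bool" where
  "Tst Y m a \<longleftrightarrow> (if even m then Y a = 2 \<and> Y (a + 2^Suc m) = 2 else Y a \<noteq> 2 \<and> Y (a + 2^Suc m) \<noteq> 2)"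

primrec Qp :: "(nat \<Rightarrow> nat) \<Rightarrow> nat \<Rightarrow> nat" where
  "Qp Y 0 = 0"
| "Qp Y (Suc m) = (if Tst Y m (Qp Y m) then Qp Y m + 2^m else Qp Y m)"

definition Yof :: "(int \<Rightarrow> nat) \<Rightarrow> nat \<Rightarrow> nat" where
  "Yof y p = y (int p)"

lemma Qp_less: "Qp Y m < 2^m"
  by (induction m) auto

lemma Tst_exact: assumes g: "good d r y" and a: "Dv r (int a) m"
  shows "Tst (Yof y) m a \<longleftrightarrow> \<not> Dv r (int a) (Suc m)"
proof -
  have c: "compat r" using g by (simp add: good_def)
  show ?thesis
  proof (cases "Dv r (int a) (Suc m)")
    case False
    have s1: "Dv r (int (a + 2^Suc m)) m" using a Dv_shift[of m "Suc m" r "int a"] by simp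
    have s2: "\<not> Dv r (int (a + 2^Suc m)) (Suc m)" using False Dv_shift[of "Suc m" "Suc m" r "int a"] by simp
    have "Yof y a = gsym d m" using good_level[OF g a False] by (simp add: Yof_def)
    moreover have "Yof y (a + 2^Suc m) = gsym d m" using good_level[OF g s1 s2] by (simp add: Yof_def)
    ultimately show ?thesis using False gsym_2[of d m] by (auto simp: Tst_def)
  next
    case True
    have s1: "Dv r (int (a + 2^Suc m)) (Suc m)" using True Dv_shift[of "Suc m" "Suc m" r "int a"] by simp
    have sp: "Dv r (int a) (Suc (Suc m)) \<longleftrightarrow> \<not> Dv r (int (a + 2^Suc m)) (Suc (Suc m))"
      using Dv_split[OF c True] by simp
    have "Yof y a = gsym d (Suc m) \<or> Yof y (a + 2^Suc m) = gsym d (Suc m)"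
      using good_level[OF g True] good_level[OF g s1] sp by (auto simp: Yof_def)
    then show ?thesis using True gsym_2[of d "Suc m"] by (auto simp: Tst_def)
  qed
qed

lemma Qp_correct: assumes g: "good d r y" shows "Dv r (int (Qp (Yof y) m)) m"
proof (induction m)
  case 0 then show ?case by simp
next
  case (Suc m)
  have c: "compat r" using g by (simp add: good_def)
  show ?case
  proof (cases "Tst (Yof y) m (Qp (Yof y) m)")
    case True
    then have "\<not> Dv r (int (Qp (Yof y) m)) (Suc m)" using Tst_exact[OF g Suc.IH] by simp
    then have "Dv r (int (Qp (Yof y) m) + 2^m) (Suc m)" using Dv_split[OF c Suc.IH] by simp
    then show ?thesis using True by simp
  next
    case False
    then show ?thesis using Tst_exact[OF g Suc.IH] by simp
  qed
qed

lemma Qp_local: "(\<And>p. p < 2^Suc m \<Longrightarrow> Y p = Y' p) \<Longrightarrow> Qp Y m = Qp Y' m"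
proof (induction m)
  case 0 then show ?case by simp
next
  case (Suc m)
  have IH: "Qp Y m = Qp Y' m" using Suc.prems by (intro Suc.IH) (simp add: less_trans[of _ "2^Suc m" "2^Suc (Suc m)"])
  have q: "Qp Y m < 2^m" by (rule Qp_less)
  have "Y (Qp Y m) = Y' (Qp Y m)" using q by (intro Suc.prems) (simp add: less_trans[of _ "2^m" "2^Suc (Suc m)"])
  moreover have "Y (Qp Y m + 2^Suc m) = Y' (Qp Y m + 2^Suc m)" using q by (intro Suc.prems) simp
  ultimately have "Tst Y m (Qp Y m) = Tst Y' m (Qp Y' m)" using IH by (simp add: Tst_def)
  then show ?case using IH by simp
qed

lemma good_canon: "good d r y \<Longrightarrow> Dv r i m \<longleftrightarrow> (2::int)^m dvd (i - int (Qp (Yof y) m))"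
  using Dv_cong[OF Qp_correct] by blast

lemma exact_level: assumes "compat r" "\<not> (\<forall>m. Dv r i m)" shows "\<exists>l. Dv r i l \<and> \<not> Dv r i (Suc l)"
proof (rule ccontr)
  assume "\<not> (\<exists>l. Dv r i l \<and> \<not> Dv r i (Suc l))"
  then have "Dv r i m" for m by (induction m) auto
  then show False using assms(2) by blast
qed

lemma good_less3: assumes "good d r y" shows "y i < 3"
proof (cases "\<forall>m. Dv r i m")
  case True
  then obtain L where "gsym d L = y i" using assms unfolding good_def by blast
  then show ?thesis using gsym_less by metis
next
  case False
  have cr: "compat r" using assms by (simp add: good_def)
  obtain l where "Dv r i l" "\<not> Dv r i (Suc l)" using exact_level[OF cr False] by blast
  then show ?thesis using good_level[OF assms] gsym_less by simp
qed

lemma good_shift: assumes "good d r y" shows "good d (\<lambda>m. r m + v) (shift v y)"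
proof -
  have e: "Dv (\<lambda>m. r m + v) i m \<longleftrightarrow> Dv r (i + v) m" for i m
    unfolding Dv_def by (simp add: algebra_simps)
  have c: "compat (\<lambda>m. r m + v)" using assms unfolding good_def compat_def
    by (metis mod_add_left_eq)
  show ?thesis using assms c unfolding good_def e shift_def by blast
qed

lemma compat_canon: "compat (\<lambda>m. - int (Qp Y m))"
  unfolding compat_def
proof
  fix m
  show "- int (Qp Y (Suc m)) mod 2 ^ m = - int (Qp Y m) mod 2 ^ m"
  proof (cases "Tst Y m (Qp Y m)")
    case True
    have "- int (Qp Y m + 2^m) = - int (Qp Y m) + (-1) * 2^m" by simp
    then show ?thesis using True by (simp only: Qp.simps if_True) (metis mod_mult_self1)
  next
    case False then show ?thesis by simp
  qed
qed

lemma agree_Qp: assumes "\<forall>i. \<bar>i\<bar> \<le> int n \<longrightarrow> y i = c i" "2^Suc M \<le> n" "m \<le> M"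
  shows "Qp (Yof y) m = Qp (Yof c) m"
proof (rule Qp_local)
  fix p :: nat assume "p < 2^Suc m"
  moreover have "(2::nat)^Suc m \<le> 2^Suc M" using assms(3) by (simp add: power_increasing)
  ultimately have "int p \<le> int n" using assms(2) by linarith
  then show "Yof y p = Yof c p" using assms(1) by (simp add: Yof_def)
qed

lemma closed_X: "closed_cfg (Xd d)"
  unfolding closed_cfg_def
proof (intro allI impI)
  fix c
  assume A: "\<forall>n. \<exists>y\<in>Xd d. \<forall>i. \<bar>i\<bar> \<le> int n \<longrightarrow> y i = c i"
  define rc where "rc = (\<lambda>m. - int (Qp (Yof c) m))"
  have crc: "compat rc" unfolding rc_def by (rule compat_canon)
  have key: "\<exists>y r. good d r y \<and> y i = c i \<and> (\<forall>m\<le>M. Dv r i m \<longleftrightarrow> Dv rc i m)" for i M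
  proof -
    obtain y where y: "y \<in> Xd d" and ag: "\<forall>j. \<bar>j\<bar> \<le> int (max (nat \<bar>i\<bar>) (2^Suc M)) \<longrightarrow> y j = c j"
      using A by blast
    obtain r where g: "good d r y" using y unfolding Xd_def by blast
    have "y i = c i" using ag by simp
    moreover have "Dv r i m \<longleftrightarrow> Dv rc i m" if "m \<le> M" for m
    proof -
      have "Qp (Yof y) m = Qp (Yof c) m" by (rule agree_Qp[OF ag _ that]) simp
      then show ?thesis using good_canon[OF g] unfolding rc_def Dv_def by simp
    qed
    ultimately show ?thesis using g by blast
  qed
  have "good d rc c"
    unfolding good_def
  proof (intro conjI allI impI crc)
    fix i l assume a: "Dv rc i l \<and> \<not> Dv rc i (Suc l)"
    obtain y r where g: "good d r y" and e: "y i = c i" and eq: "\<forall>m\<le>Suc l. Dv r i m \<longleftrightarrow> Dv rc i m"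
      using key by blast
    have "Dv r i l" using eq[rule_format, of l] a by simp
    moreover have "\<not> Dv r i (Suc l)" using eq[rule_format, of "Suc l"] a by simp
    ultimately have "y i = gsym d l" by (rule good_level[OF g])
    then show "c i = gsym d l" using e by simp
  next
    fix i M assume h: "\<forall>m. Dv rc i m"
    obtain y r where g: "good d r y" and e: "y i = c i" and eq: "\<forall>m\<le>M. Dv r i m \<longleftrightarrow> Dv rc i m"
      using key by blast
    show "\<exists>L\<ge>M. gsym d L = c i"
    proof (cases "\<forall>m. Dv r i m")
      case True
      then have "\<forall>M. \<exists>L\<ge>M. gsym d L = y i" using g unfolding good_def by blast
      then show ?thesis using e by simp
    next
      case False
      have cr: "compat r" using g by (simp add: good_def)
      obtain l where l: "Dv r i l" "\<not> Dv r i (Suc l)" using exact_level[OF cr False] by blast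
      have "M \<le> l"
      proof (rule ccontr)
        assume "\<not> M \<le> l"
        then have "Dv r i (Suc l)" using eq h by simp
        then show False using l by simp
      qed
      moreover have "y i = gsym d l" by (rule good_level[OF g l])
      ultimately show ?thesis using e by auto
    qed
  qed
  then show "c \<in> Xd d" unfolding Xd_def by blast
qed

lemma subshift_X: "subshift 3 (Xd d)"
  unfolding subshift_def
proof (intro conjI closed_X ballI allI)
  show "Xd d \<subseteq> {c. \<forall>i. c i < 3}" unfolding Xd_def using good_less3 by blast
next
  fix c v assume "c \<in> Xd d"
  then show "shift v c \<in> Xd d" unfolding Xd_def using good_shift by blast
qed

lemma cong_shift:
  assumes cr: "compat r" and cs: "compat s" and v: "(2::int)^M dvd (v + r M - s M)" and m: "m \<le> M"
  shows "Dv r (j + v) m \<longleftrightarrow> Dv s j m"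
proof -
  have d1: "(2::int)^m dvd (v + r M - s M)" using v m by (meson dvd_trans le_imp_power_dvd)
  have d2: "(2::int)^m dvd (r M - r m)" using compat_dvd[OF cr m] .
  have d3: "(2::int)^m dvd (s M - s m)" using compat_dvd[OF cs m] .
  have "(j + v + r m) = (j + s m) + ((v + r M - s M) - (r M - r m) + (s M - s m))" by simp
  moreover have "(2::int)^m dvd ((v + r M - s M) - (r M - r m) + (s M - s m))"
    using dvd_add[OF dvd_diff[OF d1 d2] d3] .
  ultimately show ?thesis unfolding Dv_def by (metis dvd_add_left_iff)
qed

lemma match_pos:
  assumes gy: "good d r y" and gw: "good d s w" and v: "(2::int)^M dvd (v + r M - s M)"
    and nj: "\<not> Dv s j M"
  shows "y (j + v) = w j"
proof -
  have cr: "compat r" and cs: "compat s" using gy gw by (auto simp: good_def)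
  obtain l where l: "Dv s j l" "\<not> Dv s j (Suc l)" using exact_level[OF cs] nj by blast
  have "l < M"
  proof (rule ccontr)
    assume "\<not> l < M"
    then have "Dv s j M" using Dv_mono[OF cs _ l(1)] by simp
    then show False using nj by simp
  qed
  then have "Dv r (j + v) l" "\<not> Dv r (j + v) (Suc l)"
    using cong_shift[OF cr cs v] l by auto
  then show ?thesis using good_level[OF gy] good_level[OF gw l] by simp
qed

lemma approx:
  assumes gy: "good d r y" and gw: "good d s w"
  shows "\<exists>v. \<forall>j. \<bar>j\<bar> \<le> int N \<longrightarrow> y (j + v) = w j"
proof -
  have cr: "compat r" and cs: "compat s" using gy gw by (auto simp: good_def)
  define M where "M = N + 2"
  have NM: "2 * int N < 2^M"
  proof -
    have "N < 2^N" by (rule less_exp)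
    then have "2 * N < 4 * 2^N" by linarith
    then have "2 * N < 2^(N+2)" by (simp add: power_add)
    then show ?thesis unfolding M_def by (metis of_nat_less_iff of_nat_mult of_nat_numeral of_nat_power)
  qed
  show ?thesis
  proof (cases "\<exists>i. \<bar>i\<bar> \<le> int N \<and> Dv s i M")
    case False
    have "(2::int)^M dvd ((s M - r M) + r M - s M)" by simp
    then show ?thesis using match_pos[OF gy gw] False by blast
  next
    case True
    then obtain i where i: "\<bar>i\<bar> \<le> int N" "Dv s i M" by blast
    have "\<exists>L\<ge>M. gsym d L = w i"
    proof (cases "\<forall>m. Dv s i m")
      case True then show ?thesis using gw unfolding good_def by blast
    next
      case False
      then obtain l where l: "Dv s i l" "\<not> Dv s i (Suc l)" using exact_level[OF cs] by blast
      have "M \<le> l"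
      proof (rule ccontr)
        assume "\<not> M \<le> l"
        then have "Suc l \<le> M" by simp
        then show False using Dv_mono[OF cs _ i(2)] l by blast
      qed
      then show ?thesis using good_level[OF gw l] by auto
    qed
    then obtain L where L: "M \<le> L" "gsym d L = w i" by blast
    define t where "t = 2^L - r (Suc L)"
    have tL: "Dv r t L"
    proof -
      have "(2::int)^L dvd (r (Suc L) - r L)" using compat_dvd[OF cr, of L "Suc L"] by simp
      then have "(2::int)^L dvd (2^L - (r (Suc L) - r L))" by (simp add: dvd_diff)
      then show ?thesis unfolding Dv_def t_def by (simp add: algebra_simps)
    qed
    have tL1: "\<not> Dv r t (Suc L)"
      unfolding Dv_def t_def by simp
    have yt: "y t = w i" using good_level[OF gy tL tL1] L by simp
    define v where "v = t - i"
    have tM: "Dv r t M" using Dv_mono[OF cr L(1) tL] .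
    have vM: "(2::int)^M dvd (v + r M - s M)"
    proof -
      have eqv: "v + r M - s M = (t + r M) - (i + s M)" unfolding v_def by simp
      show ?thesis unfolding eqv using tM i(2) unfolding Dv_def by (rule dvd_diff)
    qed
    have "y (j + v) = w j" if j: "\<bar>j\<bar> \<le> int N" for j
    proof (cases "j = i")
      case True then show ?thesis using yt unfolding v_def by simp
    next
      case False
      have "\<not> Dv s j M"
      proof
        assume "Dv s j M"
        then have dv: "(2::int)^M dvd (j - i)" using Dv_cong[OF i(2)] by simp
        have "j - i \<noteq> 0" using False by simp
        then have "\<bar>(2::int)^M\<bar> \<le> \<bar>j - i\<bar>" using dvd_imp_le_int dv by blast
        then show False using NM i(1) j by simp
      qed
      then show ?thesis using match_pos[OF gy gw vM] by blast
    qed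
    then show ?thesis by blast
  qed
qed

lemma minimal_X: assumes ne: "Xd d \<noteq> {}" shows "minimal_subshift 3 (Xd d)"
  unfolding minimal_subshift_def
proof (intro conjI subshift_X ne allI impI)
  fix Y assume a: "subshift 3 Y \<and> Y \<noteq> {} \<and> Y \<subseteq> Xd d"
  then obtain y where yY: "y \<in> Y" by blast
  then obtain r where gy: "good d r y" using a unfolding Xd_def by blast
  have "w \<in> Y" if wX: "w \<in> Xd d" for w
  proof -
    obtain s where gw: "good d s w" using wX unfolding Xd_def by blast
    have cl: "closed_cfg Y" and sh: "\<forall>c\<in>Y. \<forall>v. shift v c \<in> Y" using a unfolding subshift_def by auto
    have "\<forall>n. \<exists>y'\<in>Y. \<forall>i. \<bar>i\<bar> \<le> int n \<longrightarrow> y' i = w i"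
    proof
      fix n
      obtain v where "\<forall>j. \<bar>j\<bar> \<le> int n \<longrightarrow> y (j + v) = w j" using approx[OF gy gw] by blast
      then show "\<exists>y'\<in>Y. \<forall>i. \<bar>i\<bar> \<le> int n \<longrightarrow> y' i = w i"
        using sh yY by (intro bexI[of _ "shift v y"]) (auto simp: shift_def)
    qed
    then show ?thesis using cl unfolding closed_cfg_def by blast
  qed
  then show "Y = Xd d" using a by blast
qed

lemma ucmp_app: "cmp f 1 (\<lambda>xs. h (xs ! 0)) \<Longrightarrow> cmp f k A \<Longrightarrow> cmp f k (\<lambda>xs. h (A xs))"
  using cmp_comp1[of f "\<lambda>xs. h (xs ! 0)" k A] by simp

lemma cmpP_ifb[intro,cmpI]: "cmpP f k C \<Longrightarrow> cmpP f k P \<Longrightarrow> cmpP f k Q \<Longrightarrow>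
   cmpP f k (\<lambda>xs. if C xs then P xs else Q xs)"
proof -
  assume "cmpP f k C" "cmpP f k P" "cmpP f k Q"
  then have "cmpP f k (\<lambda>xs. (C xs \<and> P xs) \<or> (\<not> C xs \<and> Q xs))" by (intro cmpI)
  then show ?thesis by (rule back_subst[of "cmpP f k"]) auto
qed

definition sdec :: "nat \<Rightarrow> nat" where
  "sdec k = (LEAST s. k < triangle (Suc s))"

lemma triangle_ge: "n \<le> triangle n"
  by (induction n) auto

lemma sdec_props: "triangle (sdec k) \<le> k \<and> k < triangle (Suc (sdec k))"
proof -
  have ex: "k < triangle (Suc k)" using triangle_ge[of "Suc k"] by simp
  have 1: "k < triangle (Suc (sdec k))" unfolding sdec_def by (rule LeastI[where P="\<lambda>s. k < triangle (Suc s)", OF ex])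
  have 2: "triangle (sdec k) \<le> k"
  proof (cases "sdec k")
    case 0 then show ?thesis by simp
  next
    case (Suc s)
    then have "s < sdec k" by simp
    then have "\<not> k < triangle (Suc s)" unfolding sdec_def by (rule not_less_Least)
    then show ?thesis using Suc by simp
  qed
  show ?thesis using 1 2 by simp
qed

lemma prod_decode_sdec: "prod_decode k = (k - triangle (sdec k), sdec k - (k - triangle (sdec k)))"
proof -
  let ?s = "sdec k"
  have a: "triangle ?s \<le> k" "k < triangle ?s + Suc ?s" using sdec_props[of k] by auto
  have "prod_encode (k - triangle ?s, ?s - (k - triangle ?s)) = k"
    using a by (simp add: prod_encode_def)
  then show ?thesis by (metis prod_encode_inverse)
qed

lemma cmp_triangle[intro,cmpI]: "cmp f k A \<Longrightarrow> cmp f k (\<lambda>xs. triangle (A xs))"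
  unfolding triangle_def by (intro cmpI)

lemma cmp_sdec1: "cmp f 1 (\<lambda>xs. sdec (xs ! 0))"
proof -
  have "cmp f 1 (\<lambda>xs. LEAST s. (\<lambda>ys. ys ! 1 < triangle (Suc (ys ! 0))) (s # xs))"
    apply (rule cmp_muP[where P="\<lambda>ys. ys ! 1 < triangle (Suc (ys ! 0))"])
     apply (intro cmpI; simp)
    subgoal for xs using triangle_ge[of "Suc (xs!0)"] by (intro exI[of _ "xs!0"]) simp
    done
  then show ?thesis unfolding sdec_def by simp
qed

lemma cmp_sdec[intro,cmpI]: "cmp f k A \<Longrightarrow> cmp f k (\<lambda>xs. sdec (A xs))"
  by (rule ucmp_app[OF cmp_sdec1])

lemma cmp_pd1[intro,cmpI]: "cmp f k A \<Longrightarrow> cmp f k (\<lambda>xs. fst (prod_decode (A xs)))"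
  unfolding prod_decode_sdec fst_conv snd_conv by (intro cmp_sub cmp_triangle cmp_sdec)

lemma cmp_pd2[intro,cmpI]: "cmp f k A \<Longrightarrow> cmp f k (\<lambda>xs. snd (prod_decode (A xs)))"
  unfolding prod_decode_sdec fst_conv snd_conv by (intro cmp_sub cmp_triangle cmp_sdec)

lemma cmp_pe[intro,cmpI]: "cmp f k A \<Longrightarrow> cmp f k B \<Longrightarrow> cmp f k (\<lambda>xs. prod_encode (A xs, B xs))"
  unfolding prod_encode_def prod.case by (intro cmp_add cmp_triangle)

lemma cmp_bitsof: assumes g: "cmp f 1 (\<lambda>xs. g (xs ! 0))" and a: "cmp f k A"
  shows "cmp f k (\<lambda>xs. bitsof g (A xs))"
  unfolding bitsof_def
  by (intro cmp_if cmpP_eq cmp_const cmp_pd1 cmp_pd2 ucmp_app[OF g] a)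

lemma bitsof_pe: "bitsof g (prod_encode (n, v)) = (if g n = v then 1 else 0)"
  by (simp add: bitsof_def)

lemma cmp_recover: "cmp f 1 (\<lambda>xs. bitsof g (xs ! 0)) \<Longrightarrow> cmp f 1 (\<lambda>xs. g (xs ! 0))"
proof -
  assume a: "cmp f 1 (\<lambda>xs. bitsof g (xs ! 0))"
  have "cmp f 1 (\<lambda>xs. LEAST v. (\<lambda>ys. bitsof g (prod_encode (ys ! 1, ys ! 0)) = 1) (v # xs))"
    apply (rule cmp_muP[where P="\<lambda>ys. bitsof g (prod_encode (ys ! 1, ys ! 0)) = 1"])
     apply (intro cmpP_eq cmp_const ucmp_app[OF a] cmp_pe cmp_proj; simp)
    subgoal for xs by (intro exI[of _ "g (xs!0)"]) (simp add: bitsof_pe)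
    done
  then show ?thesis
  proof (rule cmp_ext)
    fix xs :: "nat list"
    have "(LEAST v. g (xs ! 0) = v) = g (xs ! 0)" by (rule Least_equality) auto
    then show "(LEAST v. (\<lambda>ys. bitsof g (prod_encode (ys ! 1, ys ! 0)) = 1) (v # xs)) = g (xs ! 0)"
      by (simp add: bitsof_pe)
  qed
qed

lemma Yof_pc: "Yof y p = point_code y (2 * p)"
  by (simp add: Yof_def point_code_def int_decode_def sum_decode_def)

lemma cmp_Y: "cmp (point_code y) k A \<Longrightarrow> cmp (point_code y) k (\<lambda>xs. Yof y (A xs))"
  unfolding Yof_pc by (intro cmp_query cmp_mult cmp_const)

lemma cmpP_Tst: assumes "cmp (point_code y) k M" "cmp (point_code y) k A"
  shows "cmpP (point_code y) k (\<lambda>xs. Tst (Yof y) (M xs) (A xs))"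
  unfolding Tst_def
  by (intro cmpP_ifb cmpP_even cmpP_conj cmpP_eq cmpP_not cmp_Y cmp_add cmp_pow2 cmp_Suc cmp_const assms)

lemma cmp_Qp1: "cmp (point_code y) 1 (\<lambda>xs. Qp (Yof y) (xs ! 0))"
proof -
  let ?S = "\<lambda>zs. if Tst (Yof y) (zs!0) (zs!1) then zs!1 + 2^(zs!0) else zs!1"
  have "cmp (point_code y) (Suc 0) (\<lambda>xs. rec_nat 0 (\<lambda>n r. ?S (n # r # tl xs)) (hd xs))"
    apply (rule cmp_prim[where B="\<lambda>ys. 0" and S="?S"])
     apply (rule cmp_const)
    apply (intro cmp_if cmpP_Tst cmp_add cmp_pow2 cmp_proj; simp)
    done
  then show ?thesis
  proof (rule cmp_ext')
    fix xs :: "nat list" assume "length xs = 1"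
    then obtain m where xs: "xs = [m]" using len1 by blast
    show "rec_nat 0 (\<lambda>n r. ?S (n # r # tl xs)) (hd xs) = Qp (Yof y) (xs ! 0)"
    proof -
      have "rec_nat 0 (\<lambda>n r. if Tst (Yof y) n r then r + 2^n else r) m' = Qp (Yof y) m'" for m'
        by (induction m') auto
      then show ?thesis unfolding xs list.sel(3) One_nat_def nth_Cons_0 nth_Cons_Suc by simp
    qed
  qed simp
qed

lemma cmp_Qp: "cmp (point_code y) k A \<Longrightarrow> cmp (point_code y) k (\<lambda>xs. Qp (Yof y) (A xs))"
  by (rule ucmp_app[OF cmp_Qp1])

definition bY :: "(int \<Rightarrow> nat) \<Rightarrow> nat \<Rightarrow> nat" where
  "bY y k = Yof y (if Tst (Yof y) (2*k+1) (Qp (Yof y) (2*k+1)) then Qp (Yof y) (2*k+1)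
               else Qp (Yof y) (2*k+1) + 2^(2*k+1))"

lemma cmp_bY: "cmp (point_code y) 1 (\<lambda>xs. bY y (xs ! 0))"
  unfolding bY_def
  by (intro cmp_Y cmp_if cmpP_Tst cmp_Qp cmp_add cmp_mult cmp_pow2 cmp_const cmp_proj) simp_all

lemma bY_correct: assumes g: "good d r y" shows "bY y k = bitsof d k"
proof -
  let ?m = "2*k+1" let ?a = "Qp (Yof y) ?m"
  have c: "compat r" using g by (simp add: good_def)
  have a: "Dv r (int ?a) ?m" by (rule Qp_correct[OF g])
  have gs: "gsym d ?m = bitsof d k" by (simp add: gsym_def)
  show ?thesis
  proof (cases "Tst (Yof y) ?m ?a")
    case True
    then have "\<not> Dv r (int ?a) (Suc ?m)" using Tst_exact[OF g a] by simp
    then have "y (int ?a) = gsym d ?m" using good_level[OF g a] by simp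
    then show ?thesis using True gs by (simp add: bY_def Yof_def)
  next
    case False
    then have "Dv r (int ?a) (Suc ?m)" using Tst_exact[OF g a] by simp
    then have n: "\<not> Dv r (int ?a + 2^?m) (Suc ?m)" using Dv_split[OF c a] by simp
    have "Dv r (int ?a + 2^?m) ?m" using a Dv_shift[of ?m ?m r "int ?a"] by simp
    then have "y (int ?a + 2^?m) = gsym d ?m" using good_level[OF g _ n] by simp
    then show ?thesis using False gs by (simp add: bY_def Yof_def)
  qed
qed

theorem decode_d: assumes "good d r y" shows "turing_red d (point_code y)"
proof -
  have "cmp (point_code y) 1 (\<lambda>xs. bitsof d (xs ! 0))"
    using cmp_bY by (rule cmp_ext) (simp add: bY_correct[OF assms])
  then show ?thesis by (rule red_cmp[OF cmp_recover])
qed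

definition cdig :: "(nat \<Rightarrow> nat) \<Rightarrow> nat \<Rightarrow> nat" where
  "cdig e j = (if even j then (if j mod 4 = 0 then 0 else 1) else bitsof e (j div 2))"

primrec Sd :: "(nat \<Rightarrow> nat) \<Rightarrow> nat \<Rightarrow> nat" where
  "Sd e 0 = 0"
| "Sd e (Suc m) = Sd e m + cdig e m * 2^m"

definition rB :: "(nat \<Rightarrow> nat) \<Rightarrow> nat \<Rightarrow> int" where
  "rB e m = - int (Sd e m)"

definition levB :: "(nat \<Rightarrow> nat) \<Rightarrow> int \<Rightarrow> nat" where
  "levB e i = (LEAST l. \<not> Dv (rB e) i (Suc l))"

definition yB :: "(nat \<Rightarrow> nat) \<Rightarrow> (nat \<Rightarrow> nat) \<Rightarrow> int \<Rightarrow> nat" where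
  "yB d e i = gsym d (levB e i)"

lemma cdig_le: "cdig e j \<le> 1"
  using bitsof_le by (simp add: cdig_def)

lemma Sd_less: "Sd e m < 2^m"
proof (induction m)
  case 0 then show ?case by simp
next
  case (Suc m)
  have h: "cdig e m * 2^m \<le> 2^m" using cdig_le[of e m] by simp
  have "Sd e (Suc m) = Sd e m + cdig e m * 2^m" by simp
  moreover have "(2::nat)^Suc m = 2^m + 2^m" by simp
  ultimately show ?case using h Suc.IH by linarith
qed

lemma compat_rB: "compat (rB e)"
  unfolding compat_def rB_def
proof
  fix m
  have "- int (Sd e (Suc m)) = - int (Sd e m) + (- int (cdig e m)) * 2^m" by simp
  then show "- int (Sd e (Suc m)) mod 2 ^ m = - int (Sd e m) mod 2 ^ m"
    by (metis mod_mult_self1)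
qed

lemma Dv_rB: "Dv (rB e) i m \<longleftrightarrow> (2::int)^m dvd (i - int (Sd e m))"
  by (simp add: Dv_def rB_def)

lemma D_cases:
  assumes dv: "(2::int)^m dvd (i - int (Sd e m))" and big: "\<bar>i\<bar> < 2^m"
  shows "i - int (Sd e m) = 0 \<or> i - int (Sd e m) = - (2^m)"
proof -
  obtain t where t: "i - int (Sd e m) = 2^m * t" using dv by (auto elim: dvdE)
  have s: "int (Sd e m) < 2^m" using Sd_less[of e m] by (metis of_nat_less_iff of_nat_numeral of_nat_power)
  have p: "(0::int) < 2^m" by simp
  have "i \<le> \<bar>i\<bar>" "- \<bar>i\<bar> \<le> i" "0 \<le> int (Sd e m)" by auto
  note facts = this t big s
  have "2^m * t < 2^m * 1" using facts by linarith
  then have t1: "t < 1" using p by (simp add: mult_less_cancel_left_pos)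
  have h: "2^m * (-2) < 2^m * t" using facts by linarith
  have t2: "-2 < t" using h mult_less_cancel_left_pos[OF p, of "-2" t] by blast
  have "t = 0 \<or> t = -1" using t1 t2 by linarith
  then show ?thesis using t by auto
qed

lemma cdig_4: "cdig e (4 * k) = 0" "cdig e (4 * k + 2) = 1"
proof -
  have "(4 * k + 2) mod 4 = (2::nat)" by presburger
  then show "cdig e (4 * k + 2) = 1" by (simp add: cdig_def)
  show "cdig e (4 * k) = 0" by (simp add: cdig_def)
qed

lemma nohole: "\<exists>m. \<not> Dv (rB e) i m"
proof (rule ccontr)
  assume "\<not> (\<exists>m. \<not> Dv (rB e) i m)"
  then have dv: "\<And>m. (2::int)^m dvd (i - int (Sd e m))" using Dv_rB by blast
  define m0 where "m0 = nat \<bar>i\<bar>"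
  have big: "\<bar>i\<bar> < 2^m" if "m0 \<le> m" for m
  proof -
    have "m0 < 2^m0" by (rule less_exp)
    also have "\<dots> \<le> 2^m" using that by (simp add: power_increasing)
    finally have "int m0 < 2^m" by (metis of_nat_less_iff of_nat_numeral of_nat_power)
    then show ?thesis unfolding m0_def by simp
  qed
  let ?D = "\<lambda>m. i - int (Sd e m)"
  have step: "?D (Suc m) = ?D m - int (cdig e m) * 2^m" for m by simp
  have cd: "cdig e m = 0 \<or> cdig e m = 1" for m using cdig_le[of e m] by auto
  have P0: "?D m = 0 \<Longrightarrow> ?D (Suc m) = 0 \<and> cdig e m = 0" if "m0 \<le> m" for m
  proof -
    assume D0: "?D m = 0"
    have "m0 \<le> Suc m" using that by simp
    from D_cases[OF dv big[OF this]]
    have "?D (Suc m) = 0 \<or> ?D (Suc m) = - (2^Suc m)" .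
    moreover have "?D (Suc m) = - int (cdig e m) * 2^m" using step D0 by simp
    ultimately show ?thesis using cd[of m] by auto
  qed
  have P1: "?D m = - (2^m) \<Longrightarrow> ?D (Suc m) = - (2^Suc m) \<and> cdig e m = 1" if "m0 \<le> m" for m
  proof -
    assume D0: "?D m = - (2^m)"
    have "m0 \<le> Suc m" using that by simp
    from D_cases[OF dv big[OF this]]
    have "?D (Suc m) = 0 \<or> ?D (Suc m) = - (2^Suc m)" .
    moreover have "?D (Suc m) = - (2^m) - int (cdig e m) * 2^m" using step D0 by simp
    ultimately show ?thesis using cd[of m] by auto
  qed
  have "?D m0 = 0 \<or> ?D m0 = - (2^m0)" using D_cases[OF dv big[OF order_refl]] .
  then show False
  proof
    assume "?D m0 = 0"
    then have "?D (m0 + k) = 0 \<and> cdig e (m0 + k) = 0" for k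
      by (induction k) (use P0 in auto)
    then have "cdig e (m0 + (3 * m0 + 2)) = 0" by blast
    moreover have "m0 + (3 * m0 + 2) = 4 * m0 + 2" by simp
    ultimately show False using cdig_4(2)[of e m0] by simp
  next
    assume "?D m0 = - (2^m0)"
    then have "?D (m0 + k) = - (2^(m0+k)) \<and> cdig e (m0 + k) = 1" for k
      by (induction k) (use P1 in auto)
    then have "cdig e (m0 + 3 * m0) = 1" by blast
    moreover have "m0 + 3 * m0 = 4 * m0" by simp
    ultimately show False using cdig_4(1)[of e m0] by simp
  qed
qed

lemma levB_exact: "Dv (rB e) i (levB e i) \<and> \<not> Dv (rB e) i (Suc (levB e i))"
proof -
  obtain m where m: "\<not> Dv (rB e) i m" using nohole by blast
  then obtain l where l: "\<not> Dv (rB e) i (Suc l)" by (cases m) auto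
  have 1: "\<not> Dv (rB e) i (Suc (levB e i))"
    unfolding levB_def by (rule LeastI[where P="\<lambda>l. \<not> Dv (rB e) i (Suc l)", OF l])
  have 2: "Dv (rB e) i (levB e i)"
  proof (cases "levB e i")
    case 0 then show ?thesis by simp
  next
    case (Suc l')
    then have "l' < levB e i" by simp
    then have "\<not> \<not> Dv (rB e) i (Suc l')" unfolding levB_def by (rule not_less_Least)
    then show ?thesis using Suc by simp
  qed
  show ?thesis using 1 2 by simp
qed

lemma levB_unique: assumes "Dv (rB e) i l" "\<not> Dv (rB e) i (Suc l)" shows "levB e i = l"
  unfolding levB_def
proof (rule Least_equality)
  show "\<not> Dv (rB e) i (Suc l)" by (rule assms(2))
  fix l' assume a: "\<not> Dv (rB e) i (Suc l')"
  show "l \<le> l'"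
  proof (rule ccontr)
    assume "\<not> l \<le> l'"
    then have "Suc l' \<le> l" by simp
    then have "Dv (rB e) i (Suc l')" using Dv_mono[OF compat_rB _ assms(1)] by blast
    then show False using a by simp
  qed
qed

lemma good_yB: "good d (rB e) (yB d e)"
  unfolding good_def
proof (intro conjI compat_rB allI impI)
  fix i l assume "Dv (rB e) i l \<and> \<not> Dv (rB e) i (Suc l)"
  then show "yB d e i = gsym d l" unfolding yB_def using levB_unique by auto
next
  fix i M assume "\<forall>m. Dv (rB e) i m"
  then show "\<exists>L\<ge>M. gsym d L = yB d e i" using nohole by blast
qed

lemma nat_cong_eq: assumes "a < 2^m" "b < 2^m" "(2::int)^m dvd (int a - int b)" shows "a = b"
proof (rule ccontr)
  assume "a \<noteq> b"
  then have "int a - int b \<noteq> 0" by simp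
  then have "\<bar>(2::int)^m\<bar> \<le> \<bar>int a - int b\<bar>" using dvd_imp_le_int assms(3) by blast
  moreover have "int a < 2^m" "int b < 2^m" using assms(1,2) by (metis of_nat_less_iff of_nat_numeral of_nat_power)+
  ultimately show False by linarith
qed

lemma Qp_yB: "Qp (Yof (yB d e)) m = Sd e m"
proof -
  have "Dv (rB e) (int (Qp (Yof (yB d e)) m)) m" by (rule Qp_correct[OF good_yB])
  then have "(2::int)^m dvd (int (Qp (Yof (yB d e)) m) - int (Sd e m))" by (simp add: Dv_rB)
  then show ?thesis using nat_cong_eq Qp_less Sd_less by blast
qed

lemma Tst_yB: "Tst (Yof (yB d e)) m (Qp (Yof (yB d e)) m) \<longleftrightarrow> cdig e m = 1"
proof -
  let ?Y = "Yof (yB d e)"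
  have A: "Qp ?Y (Suc m) = Sd e m + cdig e m * 2^m" using Qp_yB[of d e "Suc m"] by simp
  have B: "Qp ?Y m = Sd e m" by (rule Qp_yB)
  have c: "cdig e m = 0 \<or> cdig e m = 1" using cdig_le[of e m] by auto
  show ?thesis
  proof (cases "Tst ?Y m (Qp ?Y m)")
    case True
    then have "Qp ?Y (Suc m) = Qp ?Y m + 2^m" by simp
    then show ?thesis using A B c True by auto
  next
    case False
    then have "Qp ?Y (Suc m) = Qp ?Y m" by simp
    then show ?thesis using A B c False by auto
  qed
qed

lemma cmp_self1: "cmp e 1 (\<lambda>xs. e (xs ! 0))"
  by (intro cmp_query cmp_proj) simp

lemma cmp_cdig: "cmp e k A \<Longrightarrow> cmp e k (\<lambda>xs. cdig e (A xs))"
  unfolding cdig_def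
  by (intro cmp_if cmpP_even cmpP_eq cmp_mod cmp_const cmp_bitsof[OF cmp_self1] cmp_div)

lemma cmp_Sd1: "cmp e 1 (\<lambda>xs. Sd e (xs ! 0))"
proof -
  let ?S = "\<lambda>zs. zs!1 + cdig e (zs!0) * 2^(zs!0)"
  have "cmp e (Suc 0) (\<lambda>xs. rec_nat 0 (\<lambda>n r. ?S (n # r # tl xs)) (hd xs))"
    apply (rule cmp_prim[where B="\<lambda>ys. 0" and S="?S"])
     apply (rule cmp_const)
    apply (intro cmp_add cmp_mult cmp_cdig cmp_pow2 cmp_proj; simp)
    done
  then show ?thesis
  proof (rule cmp_ext')
    fix xs :: "nat list" assume "length xs = 1"
    then obtain m where xs: "xs = [m]" using len1 by blast
    show "rec_nat 0 (\<lambda>n r. ?S (n # r # tl xs)) (hd xs) = Sd e (xs ! 0)"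
    proof -
      have "rec_nat 0 (\<lambda>n r. r + cdig e n * 2^n) m' = Sd e m'" for m'
        by (induction m') auto
      then show ?thesis unfolding xs list.sel(3) One_nat_def nth_Cons_0 nth_Cons_Suc by simp
    qed
  qed simp
qed

lemma cmp_Sd: "cmp e k A \<Longrightarrow> cmp e k (\<lambda>xs. Sd e (A xs))"
  by (rule ucmp_app[OF cmp_Sd1])

definition Pn :: "(nat \<Rightarrow> nat) \<Rightarrow> nat \<Rightarrow> nat \<Rightarrow> bool" where
  "Pn e l n \<longleftrightarrow> (if even n then (n div 2) mod 2^(Suc l) \<noteq> Sd e (Suc l)
                 else (n div 2 + 1 + Sd e (Suc l)) mod 2^(Suc l) \<noteq> 0)"

lemma Pn_iff: "Pn e l n \<longleftrightarrow> \<not> Dv (rB e) (int_decode n) (Suc l)"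
proof -
  let ?M = "Suc l" let ?S = "Sd e (Suc l)" let ?p = "n div 2"
  have Sl: "?S mod 2^?M = ?S" by (rule mod_less[OF Sd_less])
  show ?thesis
  proof (cases "even n")
    case True
    have i: "int_decode n = int ?p" using True by (simp add: int_decode_def sum_decode_def)
    have "Dv (rB e) (int_decode n) ?M \<longleftrightarrow> (2::int)^?M dvd (int ?p - int ?S)" by (simp add: Dv_rB i)
    also have "\<dots> \<longleftrightarrow> int ?p mod 2^?M = int ?S mod 2^?M" by (simp add: mod_eq_dvd_iff)
    also have "\<dots> \<longleftrightarrow> int (?p mod 2^?M) = int (?S mod 2^?M)" by (simp add: zmod_int)
    also have "\<dots> \<longleftrightarrow> ?p mod 2^?M = ?S" by (simp only: Sl of_nat_eq_iff)
    finally show ?thesis using True by (simp add: Pn_def)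
  next
    case False
    have i: "int_decode n = - int ?p - 1" using False by (simp add: int_decode_def sum_decode_def)
    have ee: "int_decode n - int ?S = - int (?p + 1 + ?S)" using i by simp
    have "Dv (rB e) (int_decode n) ?M \<longleftrightarrow> (2::int)^?M dvd (int_decode n - int ?S)" by (rule Dv_rB)
    also have "\<dots> \<longleftrightarrow> (2::int)^?M dvd (- int (?p + 1 + ?S))" unfolding ee ..
    also have "\<dots> \<longleftrightarrow> (2::int)^?M dvd int (?p + 1 + ?S)" by (rule dvd_minus_iff)
    also have "\<dots> \<longleftrightarrow> (2::nat)^?M dvd (?p + 1 + ?S)" by (metis of_nat_dvd_iff of_nat_numeral of_nat_power)
    also have "\<dots> \<longleftrightarrow> (?p + 1 + ?S) mod 2^?M = 0" by (rule dvd_eq_mod_eq_0)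
    finally show ?thesis using False by (simp add: Pn_def)
  qed
qed

lemma levB_Pn: "levB e (int_decode n) = (LEAST l. Pn e l n)"
  unfolding levB_def Pn_iff ..

lemma cmp_lev1: "cmp e 1 (\<lambda>xs. LEAST l. Pn e l (xs ! 0))"
proof -
  have "cmp e 1 (\<lambda>xs. LEAST l. (\<lambda>ys. Pn e (ys ! 0) (ys ! 1)) (l # xs))"
    apply (rule cmp_muP[where P="\<lambda>ys. Pn e (ys ! 0) (ys ! 1)"])
    unfolding Pn_def
     apply (intro cmpP_ifb cmpP_even cmpP_not cmpP_eq cmp_mod cmp_div cmp_add cmp_pow2 cmp_Suc cmp_Sd cmp_const cmp_proj; simp)
    subgoal for xs
    proof -
      obtain m where "\<not> Dv (rB e) (int_decode (xs!0)) m" using nohole by blast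
      then obtain l where "\<not> Dv (rB e) (int_decode (xs!0)) (Suc l)" by (cases m) auto
      then have "Pn e l (xs!0)" using Pn_iff by blast
      then show ?thesis unfolding Pn_def by auto
    qed
    done
  then show ?thesis by simp
qed

lemma encode_yB: assumes "turing_red d e" shows "turing_red (point_code (yB d e)) e"
proof -
  have dc: "cmp e 1 (\<lambda>xs. d (xs ! 0))" by (rule cmp_red[OF assms]) (intro cmp_proj; simp)
  have "cmp e 1 (\<lambda>xs. gsym d (LEAST l. Pn e l (xs ! 0)))"
    unfolding gsym_def
    by (intro cmp_if cmpP_even cmp_const cmp_bitsof[OF dc] cmp_div cmp_lev1)
  then have "cmp e 1 (\<lambda>xs. point_code (yB d e) (xs ! 0))"
    by (rule cmp_ext) (simp add: point_code_def yB_def levB_Pn)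
  then show ?thesis by (rule red_cmp)
qed

lemma decode_yB: "turing_red e (point_code (yB d e))"
proof -
  let ?Y = "Yof (yB d e)"
  have "cmp (point_code (yB d e)) 1
          (\<lambda>xs. if Tst ?Y (2 * xs!0 + 1) (Qp ?Y (2 * xs!0 + 1)) then 1 else 0)"
    by (intro cmp_if cmpP_Tst cmp_Qp cmp_add cmp_mult cmp_const cmp_proj) simp_all
  then have "cmp (point_code (yB d e)) 1 (\<lambda>xs. bitsof e (xs ! 0))"
  proof (rule cmp_ext)
    fix xs :: "nat list"
    have "cdig e (2 * xs!0 + 1) = bitsof e (xs!0)" by (simp add: cdig_def)
    then show "(if Tst ?Y (2 * xs!0 + 1) (Qp ?Y (2 * xs!0 + 1)) then 1 else 0) = bitsof e (xs ! 0)"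
      using Tst_yB[of d e "2 * xs!0 + 1"] cdig_le[of e "2 * xs!0 + 1"] by auto
  qed
  then show ?thesis by (rule red_cmp[OF cmp_recover])
qed

theorem theorem2:
  fixes d :: "nat \<Rightarrow> nat"
  shows "\<exists>(k::nat) (X :: (int \<Rightarrow> nat) set).
           minimal_subshift k X \<and>
           (\<lambda>x. tdeg (point_code x)) ` X = {tdeg e | e. turing_red d e}"
proof (intro exI conjI)
  have yd: "yB d d \<in> Xd d" unfolding Xd_def using good_yB by blast
  show "minimal_subshift 3 (Xd d)" using minimal_X yd by blast
  show "(\<lambda>x. tdeg (point_code x)) ` Xd d = {tdeg e | e. turing_red d e}"
  proof
    show "(\<lambda>x. tdeg (point_code x)) ` Xd d \<subseteq> {tdeg e | e. turing_red d e}"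
    proof
      fix z assume "z \<in> (\<lambda>x. tdeg (point_code x)) ` Xd d"
      then obtain x where x: "x \<in> Xd d" "z = tdeg (point_code x)" by blast
      then obtain r where "good d r x" unfolding Xd_def by blast
      then have "turing_red d (point_code x)" by (rule decode_d)
      then show "z \<in> {tdeg e | e. turing_red d e}" using x by blast
    qed
  next
    show "{tdeg e | e. turing_red d e} \<subseteq> (\<lambda>x. tdeg (point_code x)) ` Xd d"
    proof
      fix z assume "z \<in> {tdeg e | e. turing_red d e}"
      then obtain e where e: "turing_red d e" "z = tdeg e" by blast
      have "yB d e \<in> Xd d" unfolding Xd_def using good_yB by blast
      moreover have "turing_equiv (point_code (yB d e)) e"
        unfolding turing_equiv_def using encode_yB[OF e(1)] decode_yB by blast
      then have "tdeg (point_code (yB d e)) = tdeg e" by (rule tdeg_eq)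
      ultimately show "z \<in> (\<lambda>x. tdeg (point_code x)) ` Xd d" using e by force
    qed
  qed
qed

end
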